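(* Let $\pi$ be a permutation of $\{1,\dots,n\}$. A set $M$ of edges of $G(\pi)$ is an induced matching if and only if the corresponding set of matches can be ordered as a chain $e_1<e_2<\dots<e_k$. Consequently, the size of a maximum induced matching of $G(\pi)$ equals the maximum length of a chain of matches.
   Context: $\pi^{-1}(i)$ denotes the position of $i$ in $\pi$. The permutation graph $G(\pi)$ has vertex set $\{1,\dots,n\}$ and $uv$ is an edge iff $(u-v)(\pi^{-1}(u)-\pi^{-1}(v))<0$. A match is an ordered pair $(x,y)$ with $1\le x<y\le n$ and $\pi^{-1}(x)>\pi^{-1}(y)$; matches correspond bijectively to edges $xy$ of $G(\pi)$. For matches $e=(x,y)$ and $e'=(x',y')$ we write $e<e'$ if $y<x'$ and $\pi^{-1}(x)<\pi^{-1}(y')$. A chain is a sequence of matches $e_1,\dots,e_k$ with $e_i<e_{i+1}$ for all $1\le i<k$; its length is $k$. An induced matching of a graph $G=(V,E)$ is a set $M\subseteq E$ such that for any two distinct edges $u_1v_1,u_2v_2\in M$, none of $u_1u_2,u_1v_2,v_1u_2,v_1v_2$ is in $E$. *)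

theory Defs
  imports "HOL-Combinatorics.Permutations"
begin

text \<open>A permutation \<pi> of {1..n} is a bijection with \<pi> permutes {1..n}; \<pi> i is the entry at
  position i, so the position of value i is inv \<pi> i.\<close>

definition pos :: "(nat \<Rightarrow> nat) \<Rightarrow> nat \<Rightarrow> nat" where
  "pos \<pi> i = inv \<pi> i"

definition perm_graph_edges :: "nat \<Rightarrow> (nat \<Rightarrow> nat) \<Rightarrow> nat set set" where
  "perm_graph_edges n \<pi> = {{u, v} | u v. u \<in> {1..n} \<and> v \<in> {1..n} \<and>
      (int u - int v) * (int (pos \<pi> u) - int (pos \<pi> v)) < 0}"

definition induced_matching :: "'a set set \<Rightarrow> 'a set set \<Rightarrow> bool" where
  "induced_matching E M \<longleftrightarrow> M \<subseteq> E \<and>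
     (\<forall>e1\<in>M. \<forall>e2\<in>M. e1 \<noteq> e2 \<longrightarrow> (\<forall>u\<in>e1. \<forall>v\<in>e2. {u, v} \<notin> E))"

definition is_match :: "nat \<Rightarrow> (nat \<Rightarrow> nat) \<Rightarrow> nat \<times> nat \<Rightarrow> bool" where
  "is_match n \<pi> e \<longleftrightarrow> 1 \<le> fst e \<and> fst e < snd e \<and> snd e \<le> n \<and> pos \<pi> (fst e) > pos \<pi> (snd e)"

definition match_less :: "(nat \<Rightarrow> nat) \<Rightarrow> nat \<times> nat \<Rightarrow> nat \<times> nat \<Rightarrow> bool" where
  "match_less \<pi> e e' \<longleftrightarrow> snd e < fst e' \<and> pos \<pi> (fst e) < pos \<pi> (snd e')"

definition is_chain :: "nat \<Rightarrow> (nat \<Rightarrow> nat) \<Rightarrow> (nat \<times> nat) list \<Rightarrow> bool" where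
  "is_chain n \<pi> es \<longleftrightarrow> (\<forall>e\<in>set es. is_match n \<pi> e) \<and>
     (\<forall>i. Suc i < length es \<longrightarrow> match_less \<pi> (es ! i) (es ! Suc i))"

definition matches_of :: "nat \<Rightarrow> (nat \<Rightarrow> nat) \<Rightarrow> nat set set \<Rightarrow> (nat \<times> nat) set" where
  "matches_of n \<pi> M = {e. is_match n \<pi> e \<and> {fst e, snd e} \<in> M}"

end

theory Submission imports Defs begin
lemma arith_core:
  fixes x1 y1 x2 y2 a1 b1 a2 b2 :: int
  assumes "x1<y1" "b1<a1" "x2<y2" "b2<a2"
    and "x1\<noteq>x2 \<Longrightarrow> a1\<noteq>a2" "x1\<noteq>y2 \<Longrightarrow> a1\<noteq>b2"
    and "y1\<noteq>x2 \<Longrightarrow> b1\<noteq>a2" "y1\<noteq>y2 \<Longrightarrow> b1\<noteq>b2"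
    and "x1=x2 \<Longrightarrow> a1=a2" "x1=y2 \<Longrightarrow> a1=b2" "y1=x2 \<Longrightarrow> b1=a2" "y1=y2 \<Longrightarrow> b1=b2"
    and "\<not> (x1-x2)*(a1-a2) < 0" "\<not> (x1-y2)*(a1-b2) < 0"
    and "\<not> (y1-x2)*(b1-a2) < 0" "\<not> (y1-y2)*(b1-b2) < 0"
    and "(x1,y1)\<noteq>(x2,y2)"
  shows "(y1<x2 \<and> a1<b2) \<or> (y2<x1 \<and> a2<b1)"
proof -
  have h1: "(x1<x2 \<longrightarrow> a1 \<le> a2) \<and> (x2<x1 \<longrightarrow> a2 \<le> a1)" using assms(13) by (auto simp: mult_less_0_iff)
  have h2: "(x1<y2 \<longrightarrow> a1 \<le> b2) \<and> (y2<x1 \<longrightarrow> b2 \<le> a1)" using assms(14) by (auto simp: mult_less_0_iff)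
  have h3: "(y1<x2 \<longrightarrow> b1 \<le> a2) \<and> (x2<y1 \<longrightarrow> a2 \<le> b1)" using assms(15) by (auto simp: mult_less_0_iff)
  have h4: "(y1<y2 \<longrightarrow> b1 \<le> b2) \<and> (y2<y1 \<longrightarrow> b2 \<le> b1)" using assms(16) by (auto simp: mult_less_0_iff)
  show ?thesis using h1 h2 h3 h4 assms(1-12,17) by (smt (verit))
qed

lemma prod_pos:
  fixes u v pu pv :: nat
  assumes "u < v" "pu < pv"
  shows "\<not> (int u - int v) * (int pu - int pv) < 0"
  using assms by (auto simp: mult_less_0_iff)

lemma prod_swap: "(int v - int u) * (int b - int a) = (int u - int v) * (int a - int b)"
  by (simp add: algebra_simps)

lemma edge_iff: "{u,v} \<in> perm_graph_edges n \<pi> \<longleftrightarrow> u\<in>{1..n} \<and> v\<in>{1..n} \<and>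
   (int u - int v)*(int (pos \<pi> u) - int (pos \<pi> v)) < 0"
proof
  assume "{u,v} \<in> perm_graph_edges n \<pi>"
  then obtain a b where ab: "{u,v} = {a,b}" "a\<in>{1..n}" "b\<in>{1..n}"
    "(int a - int b)*(int (pos \<pi> a) - int (pos \<pi> b)) < 0"
    unfolding perm_graph_edges_def by blast
  from ab(1) have "(u=a \<and> v=b) \<or> (u=b \<and> v=a)" by (auto simp: doubleton_eq_iff)
  then show "u\<in>{1..n} \<and> v\<in>{1..n} \<and> (int u - int v)*(int (pos \<pi> u) - int (pos \<pi> v)) < 0"
    using ab prod_swap by metis
next
  assume "u\<in>{1..n} \<and> v\<in>{1..n} \<and> (int u - int v)*(int (pos \<pi> u) - int (pos \<pi> v)) < 0"
  then show "{u,v} \<in> perm_graph_edges n \<pi>" unfolding perm_graph_edges_def by blast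
qed

lemma match_edge: "is_match n \<pi> m \<Longrightarrow> {fst m, snd m} \<in> perm_graph_edges n \<pi>"
  unfolding edge_iff is_match_def by (auto simp: mult_less_0_iff)

lemma edge_match: assumes "e \<in> perm_graph_edges n \<pi>"
  shows "\<exists>m. is_match n \<pi> m \<and> e = {fst m, snd m}"
proof -
  obtain u v where uv: "e = {u,v}" "u\<in>{1..n}" "v\<in>{1..n}"
    "(int u - int v)*(int (pos \<pi> u) - int (pos \<pi> v)) < 0"
    using assms unfolding perm_graph_edges_def by blast
  show ?thesis
  proof (cases "u < v")
    case True
    then have "is_match n \<pi> (u,v)" using uv unfolding is_match_def by (auto simp: mult_less_0_iff)
    then show ?thesis using uv by auto
  next
    case False
    then have "is_match n \<pi> (v,u)" using uv unfolding is_match_def by (auto simp: mult_less_0_iff)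
    then show ?thesis using uv by auto
  qed
qed

lemma pair_eq: "{a,b}={c,d} \<Longrightarrow> (a::nat)<b \<Longrightarrow> c<d \<Longrightarrow> a=c \<and> b=d"
  by (auto simp: doubleton_eq_iff)

lemma total_iff:
  assumes inj: "inj_on (pos \<pi>) {1..n}" and m1: "is_match n \<pi> m1" and m2: "is_match n \<pi> m2"
    and ne: "m1 \<noteq> m2"
  shows "(\<forall>u\<in>{fst m1, snd m1}. \<forall>v\<in>{fst m2, snd m2}. {u,v} \<notin> perm_graph_edges n \<pi>)
     \<longleftrightarrow> match_less \<pi> m1 m2 \<or> match_less \<pi> m2 m1"
proof
  assume H: "\<forall>u\<in>{fst m1, snd m1}. \<forall>v\<in>{fst m2, snd m2}. {u,v} \<notin> perm_graph_edges n \<pi>"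
  obtain x1 y1 where e1: "m1 = (x1,y1)" by (cases m1)
  obtain x2 y2 where e2: "m2 = (x2,y2)" by (cases m2)
  have r: "x1\<in>{1..n}" "y1\<in>{1..n}" "x2\<in>{1..n}" "y2\<in>{1..n}"
    and o: "x1<y1" "pos \<pi> y1 < pos \<pi> x1" "x2<y2" "pos \<pi> y2 < pos \<pi> x2"
    using m1 m2 e1 e2 unfolding is_match_def by auto
  have ij: "\<And>a b. a\<in>{1..n} \<Longrightarrow> b\<in>{1..n} \<Longrightarrow> a\<noteq>b \<Longrightarrow> int (pos \<pi> a) \<noteq> int (pos \<pi> b)"
    using inj by (auto dest: inj_onD)
  have ne': "\<And>a b. a\<in>{1..n} \<Longrightarrow> b\<in>{1..n} \<Longrightarrow> {a,b} \<notin> perm_graph_edges n \<pi> \<Longrightarrow>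
     \<not> (int a - int b)*(int (pos \<pi> a) - int (pos \<pi> b)) < 0"
    using edge_iff by blast
  have "(int y1<int x2 \<and> int (pos \<pi> x1)< int (pos \<pi> y2)) \<or> (int y2<int x1 \<and> int (pos \<pi> x2)<int (pos \<pi> y1))"
    apply (rule arith_core)
    using r o ij ne' H e1 e2 ne by auto
  then show "match_less \<pi> m1 m2 \<or> match_less \<pi> m2 m1"
    unfolding match_less_def e1 e2 by auto
next
  have side: "\<forall>u\<in>{fst a, snd a}. \<forall>v\<in>{fst b, snd b}. {u,v} \<notin> perm_graph_edges n \<pi>"
    if ma: "is_match n \<pi> a" and mb: "is_match n \<pi> b" and R: "match_less \<pi> a b" for a b
  proof (intro ballI)
    fix u v assume u: "u\<in>{fst a, snd a}" and v: "v\<in>{fst b, snd b}"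
    have "u < v" "pos \<pi> u < pos \<pi> v" using u v ma mb R unfolding is_match_def match_less_def by auto
    then show "{u,v} \<notin> perm_graph_edges n \<pi>" using edge_iff prod_pos by blast
  qed
  assume "match_less \<pi> m1 m2 \<or> match_less \<pi> m2 m1"
  then show "\<forall>u\<in>{fst m1, snd m1}. \<forall>v\<in>{fst m2, snd m2}. {u,v} \<notin> perm_graph_edges n \<pi>"
  proof
    assume "match_less \<pi> m1 m2" then show ?thesis using side m1 m2 by blast
  next
    assume "match_less \<pi> m2 m1"
    then have "\<forall>u\<in>{fst m2, snd m2}. \<forall>v\<in>{fst m1, snd m1}. {u,v} \<notin> perm_graph_edges n \<pi>"
      using side m1 m2 by blast
    then show ?thesis by (metis insert_commute)
  qed
qed


lemma R_trans: "is_match n \<pi> b \<Longrightarrow> match_less \<pi> a b \<Longrightarrow> match_less \<pi> b c \<Longrightarrow> match_less \<pi> a c"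
  unfolding is_match_def match_less_def by auto

lemma R_irrefl: "is_match n \<pi> a \<Longrightarrow> \<not> match_less \<pi> a a"
  unfolding is_match_def match_less_def by auto

lemma R_fst: "is_match n \<pi> a \<Longrightarrow> match_less \<pi> a b \<Longrightarrow> fst a < fst b"
  unfolding is_match_def match_less_def by auto

lemma chain_sorted: assumes "is_chain n \<pi> es" shows "sorted_wrt (match_less \<pi>) es"
  unfolding sorted_wrt_iff_nth_less
proof (intro allI impI)
  fix i j assume "i < j" "j < length es"
  then show "match_less \<pi> (es ! i) (es ! j)"
  proof (induction j)
    case 0 then show ?case by simp
  next
    case (Suc j)
    have step: "match_less \<pi> (es ! j) (es ! Suc j)" using Suc.prems assms unfolding is_chain_def by auto
    show ?case
    proof (cases "i = j")
      case True then show ?thesis using step by simp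
    next
      case False
      then have "match_less \<pi> (es ! i) (es ! j)" using Suc by auto
      moreover have "is_match n \<pi> (es ! j)" using assms Suc.prems unfolding is_chain_def by auto
      ultimately show ?thesis using step R_trans by blast
    qed
  qed
qed

lemma sorted_total: "sorted_wrt R es \<Longrightarrow> a\<in>set es \<Longrightarrow> b\<in>set es \<Longrightarrow> a\<noteq>b \<Longrightarrow> R a b \<or> R b a"
  unfolding sorted_wrt_iff_nth_less in_set_conv_nth
  by (metis linorder_neqE_nat)

lemma sorted_chain: "(\<forall>e\<in>set es. is_match n \<pi> e) \<Longrightarrow> sorted_wrt (match_less \<pi>) es \<Longrightarrow> is_chain n \<pi> es"
  unfolding is_chain_def sorted_wrt_iff_nth_less by auto

lemma sorted_distinct: "(\<forall>e\<in>set es. is_match n \<pi> e) \<Longrightarrow> sorted_wrt (match_less \<pi>) es \<Longrightarrow> distinct es"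
  unfolding distinct_conv_nth sorted_wrt_iff_nth_less
  by (metis R_irrefl linorder_neqE_nat nth_mem)

lemma build:
  assumes fin: "finite S" and ms: "\<forall>e\<in>S. is_match n \<pi> e"
    and tot: "\<forall>a\<in>S. \<forall>b\<in>S. a\<noteq>b \<longrightarrow> match_less \<pi> a b \<or> match_less \<pi> b a"
  shows "\<exists>es. sorted_wrt (match_less \<pi>) es \<and> distinct es \<and> set es = S"
proof -
  have inj: "inj_on fst S"
  proof (rule inj_onI)
    fix a b assume "a\<in>S" "b\<in>S" "fst a = fst b"
    then show "a = b" using tot ms R_fst by (metis less_irrefl)
  qed
  define g where "g = the_inv_into S fst"
  define es where "es = map g (sorted_list_of_set (fst ` S))"
  have gS: "\<And>x. x \<in> fst ` S \<Longrightarrow> g x \<in> S \<and> fst (g x) = x"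
    unfolding g_def using inj by (meson f_the_inv_into_f order_refl the_inv_into_into)
  have set: "set es = S"
  proof -
    have "set es = g ` fst ` S" unfolding es_def using fin by simp
    also have "\<dots> = S"
    proof
      show "g ` fst ` S \<subseteq> S" using gS by blast
      show "S \<subseteq> g ` fst ` S"
      proof
        fix x assume "x \<in> S"
        then have "g (fst x) = x" unfolding g_def using inj by (simp add: the_inv_into_f_f)
        then show "x \<in> g ` fst ` S" using \<open>x \<in> S\<close> by (metis image_eqI)
      qed
    qed
    finally show ?thesis .
  qed
  have "sorted_wrt (\<lambda>x y. match_less \<pi> (g x) (g y)) (sorted_list_of_set (fst ` S))"
  proof (rule sorted_wrt_mono_rel[of _ "(<)"])
    fix x y assume x: "x \<in> set (sorted_list_of_set (fst ` S))" and y: "y \<in> set (sorted_list_of_set (fst ` S))"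
      and xy: "x < y"
    have x': "x \<in> fst ` S" and y': "y \<in> fst ` S" using x y fin by auto
    then have "g x \<in> S" "g y \<in> S" "fst (g x) = x" "fst (g y) = y" using gS by auto
    then show "match_less \<pi> (g x) (g y)" using tot ms R_fst xy by (metis less_asym less_irrefl)
  qed simp
  then have s: "sorted_wrt (match_less \<pi>) es" unfolding es_def by (simp add: sorted_wrt_map)
  then have "distinct es" using sorted_distinct ms set by blast
  then show ?thesis using s set by blast
qed


lemma matches_fin: "finite (matches_of n \<pi> M)"
  by (rule finite_subset[of _ "{1..n} \<times> {1..n}"]) (auto simp: matches_of_def is_match_def)

lemma induced_total:
  assumes inj: "inj_on (pos \<pi>) {1..n}" and ME: "M \<subseteq> perm_graph_edges n \<pi>"
  shows "induced_matching (perm_graph_edges n \<pi>) M \<longleftrightarrow>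
    (\<forall>a\<in>matches_of n \<pi> M. \<forall>b\<in>matches_of n \<pi> M. a\<noteq>b \<longrightarrow> match_less \<pi> a b \<or> match_less \<pi> b a)"
proof
  assume I: "induced_matching (perm_graph_edges n \<pi>) M"
  show "\<forall>a\<in>matches_of n \<pi> M. \<forall>b\<in>matches_of n \<pi> M. a\<noteq>b \<longrightarrow> match_less \<pi> a b \<or> match_less \<pi> b a"
  proof (intro ballI impI)
    fix a b assume a: "a \<in> matches_of n \<pi> M" and b: "b \<in> matches_of n \<pi> M" and ab: "a \<noteq> b"
    have ma: "is_match n \<pi> a" "{fst a, snd a} \<in> M" and mb: "is_match n \<pi> b" "{fst b, snd b} \<in> M"
      using a b unfolding matches_of_def by auto
    have neq: "{fst a, snd a} \<noteq> {fst b, snd b}"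
    proof
      assume "{fst a, snd a} = {fst b, snd b}"
      then have "fst a = fst b \<and> snd a = snd b" using pair_eq ma mb unfolding is_match_def by blast
      then show False using ab by (simp add: prod_eq_iff)
    qed
    have H: "\<forall>e1\<in>M. \<forall>e2\<in>M. e1 \<noteq> e2 \<longrightarrow> (\<forall>u\<in>e1. \<forall>v\<in>e2. {u, v} \<notin> perm_graph_edges n \<pi>)"
      using I unfolding induced_matching_def by (rule conjunct2)
    have "\<forall>u\<in>{fst a, snd a}. \<forall>v\<in>{fst b, snd b}. {u,v} \<notin> perm_graph_edges n \<pi>"
      using H ma(2) mb(2) neq by simp
    then show "match_less \<pi> a b \<or> match_less \<pi> b a" using total_iff[OF inj ma(1) mb(1) ab] by (rule iffD1[rotated])
  qed
next
  assume T: "\<forall>a\<in>matches_of n \<pi> M. \<forall>b\<in>matches_of n \<pi> M. a\<noteq>b \<longrightarrow> match_less \<pi> a b \<or> match_less \<pi> b a"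
  have "\<forall>e1\<in>M. \<forall>e2\<in>M. e1 \<noteq> e2 \<longrightarrow> (\<forall>u\<in>e1. \<forall>v\<in>e2. {u, v} \<notin> perm_graph_edges n \<pi>)"
  proof (rule ballI, rule ballI, rule impI)
    fix e1 e2 assume e1: "e1 \<in> M" and e2: "e2 \<in> M" and ne: "e1 \<noteq> e2"
    obtain a where a: "is_match n \<pi> a" "e1 = {fst a, snd a}" using edge_match[OF subsetD[OF ME e1]] by blast
    obtain b where b: "is_match n \<pi> b" "e2 = {fst b, snd b}" using edge_match[OF subsetD[OF ME e2]] by blast
    have am: "a \<in> matches_of n \<pi> M" "b \<in> matches_of n \<pi> M" using a b e1 e2 unfolding matches_of_def by auto
    have "a \<noteq> b" using ne a b by auto
    then have "match_less \<pi> a b \<or> match_less \<pi> b a" using T am by blast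
    then have "\<forall>u\<in>{fst a, snd a}. \<forall>v\<in>{fst b, snd b}. {u, v} \<notin> perm_graph_edges n \<pi>"
      using total_iff[OF inj a(1) b(1) \<open>a\<noteq>b\<close>] by (rule iffD2[rotated])
    then show "\<forall>u\<in>e1. \<forall>v\<in>e2. {u, v} \<notin> perm_graph_edges n \<pi>"
      using a(2) b(2) by simp
  qed
  then show "induced_matching (perm_graph_edges n \<pi>) M"
    unfolding induced_matching_def using ME by (rule conjI[rotated])
qed

lemma part1:
  assumes inj: "inj_on (pos \<pi>) {1..n}" and ME: "M \<subseteq> perm_graph_edges n \<pi>"
  shows "induced_matching (perm_graph_edges n \<pi>) M \<longleftrightarrow>
     (\<exists>es. is_chain n \<pi> es \<and> distinct es \<and> set es = matches_of n \<pi> M)"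
proof
  assume "induced_matching (perm_graph_edges n \<pi>) M"
  then have T: "\<forall>a\<in>matches_of n \<pi> M. \<forall>b\<in>matches_of n \<pi> M. a\<noteq>b \<longrightarrow> match_less \<pi> a b \<or> match_less \<pi> b a"
    using induced_total[OF inj ME] by blast
  have ms: "\<forall>e\<in>matches_of n \<pi> M. is_match n \<pi> e" unfolding matches_of_def by auto
  obtain es where es: "sorted_wrt (match_less \<pi>) es" "distinct es" "set es = matches_of n \<pi> M"
    using build[OF matches_fin ms T] by blast
  have ms': "\<forall>e\<in>set es. is_match n \<pi> e" using ms es(3) by simp
  have "is_chain n \<pi> es" using sorted_chain[OF ms' es(1)] .
  then show "\<exists>es. is_chain n \<pi> es \<and> distinct es \<and> set es = matches_of n \<pi> M" using es by blast
next
  assume "\<exists>es. is_chain n \<pi> es \<and> distinct es \<and> set es = matches_of n \<pi> M"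
  then obtain es where es: "is_chain n \<pi> es" "set es = matches_of n \<pi> M" by blast
  have "sorted_wrt (match_less \<pi>) es" using chain_sorted[OF es(1)] .
  then have "\<forall>a\<in>matches_of n \<pi> M. \<forall>b\<in>matches_of n \<pi> M. a\<noteq>b \<longrightarrow> match_less \<pi> a b \<or> match_less \<pi> b a"
    using sorted_total[OF \<open>sorted_wrt (match_less \<pi>) es\<close>] unfolding es(2)[symmetric] by blast
  then show "induced_matching (perm_graph_edges n \<pi>) M" using induced_total[OF inj ME] by blast
qed

lemma card_matches:
  assumes ME: "M \<subseteq> perm_graph_edges n \<pi>"
  shows "card (matches_of n \<pi> M) = card M"
proof (rule bij_betw_same_card)
  show "bij_betw (\<lambda>m. {fst m, snd m}) (matches_of n \<pi> M) M"
    unfolding bij_betw_def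
  proof
    show "inj_on (\<lambda>m. {fst m, snd m}) (matches_of n \<pi> M)"
    proof (rule inj_onI)
      fix a b assume "a \<in> matches_of n \<pi> M" "b \<in> matches_of n \<pi> M" "{fst a, snd a} = {fst b, snd b}"
      then have "fst a < snd a" "fst b < snd b" unfolding matches_of_def is_match_def by auto
      then have "fst a = fst b \<and> snd a = snd b" using pair_eq \<open>{fst a, snd a} = {fst b, snd b}\<close> by blast
      then show "a = b" by (simp add: prod_eq_iff)
    qed
    show "(\<lambda>m. {fst m, snd m}) ` matches_of n \<pi> M = M"
    proof
      show "(\<lambda>m. {fst m, snd m}) ` matches_of n \<pi> M \<subseteq> M" unfolding matches_of_def by auto
      show "M \<subseteq> (\<lambda>m. {fst m, snd m}) ` matches_of n \<pi> M"
      proof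
        fix e assume e: "e \<in> M"
        then obtain m where "is_match n \<pi> m" "e = {fst m, snd m}" using edge_match ME by blast
        then show "e \<in> (\<lambda>m. {fst m, snd m}) ` matches_of n \<pi> M" using e unfolding matches_of_def by auto
      qed
    qed
  qed
qed

theorem mainTheorem6:
  fixes n :: nat and \<pi> :: "nat \<Rightarrow> nat"
  assumes "\<pi> permutes {1..n}"
  shows "(\<forall>M. M \<subseteq> perm_graph_edges n \<pi> \<longrightarrow>
            (induced_matching (perm_graph_edges n \<pi>) M \<longleftrightarrow>
             (\<exists>es. is_chain n \<pi> es \<and> distinct es \<and> set es = matches_of n \<pi> M)))
       \<and> Max {card M | M. induced_matching (perm_graph_edges n \<pi>) M}
           = Max {length es | es. is_chain n \<pi> es}"
proof
  have inj: "inj_on (pos \<pi>) {1..n}"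
    unfolding pos_def[abs_def] using permutes_inj[OF permutes_inv[OF assms]] by (metis inj_on_subset subset_UNIV)
  show P1: "\<forall>M. M \<subseteq> perm_graph_edges n \<pi> \<longrightarrow>
            (induced_matching (perm_graph_edges n \<pi>) M \<longleftrightarrow>
             (\<exists>es. is_chain n \<pi> es \<and> distinct es \<and> set es = matches_of n \<pi> M))"
    using part1[OF inj] by blast
  have "{card M | M. induced_matching (perm_graph_edges n \<pi>) M} = {length es | es. is_chain n \<pi> es}"
  proof (intro equalityI subsetI)
    fix k assume "k \<in> {card M | M. induced_matching (perm_graph_edges n \<pi>) M}"
    then obtain M where M: "induced_matching (perm_graph_edges n \<pi>) M" "k = card M" by blast
    have ME: "M \<subseteq> perm_graph_edges n \<pi>" using M unfolding induced_matching_def by blast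
    obtain es where es: "is_chain n \<pi> es" "distinct es" "set es = matches_of n \<pi> M"
      using part1[OF inj ME] M by blast
    have "length es = k" using distinct_card[OF es(2)] es(3) card_matches[OF ME] M by simp
    then show "k \<in> {length es | es. is_chain n \<pi> es}" using es by blast
  next
    fix k assume "k \<in> {length es | es. is_chain n \<pi> es}"
    then obtain es where es: "is_chain n \<pi> es" "k = length es" by blast
    have ms: "\<forall>e\<in>set es. is_match n \<pi> e" using es unfolding is_chain_def by blast
    have dist: "distinct es" using sorted_distinct[OF ms chain_sorted[OF es(1)]] .
    define M where "M = (\<lambda>m. {fst m, snd m}) ` set es"
    have ME: "M \<subseteq> perm_graph_edges n \<pi>" unfolding M_def using ms match_edge by blast
    have mo: "matches_of n \<pi> M = set es"
    proof
      show "set es \<subseteq> matches_of n \<pi> M" unfolding M_def matches_of_def using ms by auto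
      show "matches_of n \<pi> M \<subseteq> set es"
      proof
        fix m assume "m \<in> matches_of n \<pi> M"
        then obtain m' where m': "is_match n \<pi> m" "m' \<in> set es" "{fst m, snd m} = {fst m', snd m'}"
          unfolding matches_of_def M_def by blast
        have "fst m < snd m" "fst m' < snd m'" using m' ms unfolding is_match_def by auto
        then have "fst m = fst m' \<and> snd m = snd m'" using pair_eq m'(3) by blast
        then have "m = m'" by (simp add: prod_eq_iff)
        then show "m \<in> set es" using m' by simp
      qed
    qed
    have "induced_matching (perm_graph_edges n \<pi>) M" using part1[OF inj ME] es dist mo by blast
    moreover have "card M = k" using card_matches[OF ME] mo distinct_card[OF dist] es by simp
    ultimately show "k \<in> {card M | M. induced_matching (perm_graph_edges n \<pi>) M}" by blast
  qed
  then show "Max {card M | M. induced_matching (perm_graph_edges n \<pi>) M}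
           = Max {length es | es. is_chain n \<pi> es}" by simp
qed

end
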